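(* Let $\mathcal{J}$ be a simple input set for Machine Covering on $m$ machines. Then for every arrival order of $\mathcal{J}$, the Greedy-strategy produces a schedule with minimum load at least $\frac{\mathrm{OPT}(\mathcal{J})}{100\sqrt[4]{m}}$.
   Context: Machine Covering: $n$ jobs with non-negative sizes are assigned to $m$ identical parallel machines, maximizing the minimum machine load; $\mathrm{OPT}(\mathcal{J})$ is the optimal offline minimum load. The Greedy-strategy processes jobs in arrival order and assigns each to a currently least loaded machine (ties broken arbitrarily). A job is called large if its size exceeds $\frac{\mathrm{OPT}(\mathcal{J})}{100\sqrt[4]{m}}$ and small otherwise; $k$ is the number of large jobs in $\mathcal{J}$. The input set $\mathcal{J}$ is called simple if $n<m$, or $k\ge m$, or $k\le m-\frac{m^{3/4}}{50}$. *)

theory Defs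
  imports Complex_Main "HOL-Library.FuncSet"
begin

text \<open>Jobs are given as a list of sizes in arrival order; job i has size xs!i.
  A schedule on m machines (numbered 0..<m) is a map a from job indices {..<length xs}
  to machines.\<close>

definition schedules :: "nat \<Rightarrow> real list \<Rightarrow> (nat \<Rightarrow> nat) set" where
  "schedules m xs = {..<length xs} \<rightarrow>\<^sub>E {..<m}"

definition load :: "real list \<Rightarrow> (nat \<Rightarrow> nat) \<Rightarrow> nat \<Rightarrow> real" where
  "load xs a j = (\<Sum>i\<in>{i. i < length xs \<and> a i = j}. xs ! i)"

definition min_load :: "nat \<Rightarrow> real list \<Rightarrow> (nat \<Rightarrow> nat) \<Rightarrow> real" where
  "min_load m xs a = Min ((load xs a) ` {..<m})"

definition OPT :: "nat \<Rightarrow> real list \<Rightarrow> real" where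
  "OPT m xs = Max ((min_load m xs) ` schedules m xs)"

definition load_before :: "real list \<Rightarrow> (nat \<Rightarrow> nat) \<Rightarrow> nat \<Rightarrow> nat \<Rightarrow> real" where
  "load_before xs a i j = (\<Sum>k\<in>{k. k < i \<and> a k = j}. xs ! k)"

text \<open>a is a schedule the Greedy strategy may produce (ties broken arbitrarily).\<close>
definition greedy_schedule :: "nat \<Rightarrow> real list \<Rightarrow> (nat \<Rightarrow> nat) \<Rightarrow> bool" where
  "greedy_schedule m xs a \<longleftrightarrow> a \<in> schedules m xs \<and>
     (\<forall>i < length xs. \<forall>j < m. load_before xs a i (a i) \<le> load_before xs a i j)"

definition num_large :: "nat \<Rightarrow> real list \<Rightarrow> nat" where
  "num_large m xs = card {i. i < length xs \<and> xs ! i > OPT m xs / (100 * root 4 (real m))}"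

definition simple_input :: "nat \<Rightarrow> real list \<Rightarrow> bool" where
  "simple_input m xs \<longleftrightarrow> length xs < m \<or> num_large m xs \<ge> m \<or>
     real (num_large m xs) \<le> real m - real m powr (3/4) / 50"

end

theory Submission
  imports Defs
begin

lemma nn_nth: "\<forall>x \<in> set xs. x \<ge> 0 \<Longrightarrow> k < length xs \<Longrightarrow> xs ! k \<ge> (0::real)"
  using nth_mem by blast

lemma load_nonneg: "\<forall>x \<in> set xs. x \<ge> 0 \<Longrightarrow> load xs a j \<ge> 0"
  unfolding load_def by (rule sum_nonneg) (auto intro: nn_nth)

lemma lb_le_load:
  assumes "\<forall>x \<in> set xs. x \<ge> 0" "i \<le> length xs"
  shows "load_before xs a i j \<le> load xs a j"
  unfolding load_before_def load_def
  by (rule sum_mono2) (use assms in \<open>auto intro: nn_nth\<close>)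

lemma elem_le_load:
  assumes "\<forall>x \<in> set xs. x \<ge> 0" "i < length xs"
  shows "xs ! i \<le> load xs a (a i)"
  unfolding load_def
  by (rule member_le_sum) (use assms in \<open>auto intro: nn_nth\<close>)

lemma elem_le_lb:
  assumes "\<forall>x \<in> set xs. x \<ge> 0" "i < i'" "i' \<le> length xs"
  shows "xs ! i \<le> load_before xs a i' (a i)"
  unfolding load_before_def
  by (rule member_le_sum) (use assms in \<open>auto intro: nn_nth\<close>)

lemma min_load_attained:
  assumes "m \<ge> 1" shows "\<exists>j<m. load xs a j = min_load m xs a"
proof -
  have "min_load m xs a \<in> (load xs a) ` {..<m}"
    unfolding min_load_def by (rule Min_in) (use assms in \<open>auto simp: lessThan_empty_iff\<close>)
  then show ?thesis by auto
qed

lemma min_load_le: "j < m \<Longrightarrow> min_load m xs a \<le> load xs a j"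
  unfolding min_load_def by (rule Min_le) auto

lemma min_load_nonneg:
  assumes "m \<ge> 1" "\<forall>x \<in> set xs. x \<ge> 0" shows "min_load m xs a \<ge> 0"
  using min_load_attained[OF assms(1), of xs a] load_nonneg[OF assms(2)] by metis

lemma sched_finite: "finite (schedules m xs)"
  unfolding schedules_def by (rule finite_PiE) auto

lemma sched_ne: assumes "m \<ge> 1" shows "schedules m xs \<noteq> {}"
proof -
  have "(\<lambda>i. if i < length xs then 0 else undefined) \<in> schedules m xs"
    unfolding schedules_def using assms by (auto split: if_splits)
  then show ?thesis by blast
qed

lemma OPT_attained:
  assumes "m \<ge> 1" shows "\<exists>b \<in> schedules m xs. min_load m xs b = OPT m xs"
proof -
  have "OPT m xs \<in> (min_load m xs) ` schedules m xs"
    unfolding OPT_def by (rule Max_in) (use sched_finite sched_ne[OF assms] in auto)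
  then show ?thesis by auto
qed

definition smallpart :: "real list \<Rightarrow> real \<Rightarrow> (nat \<Rightarrow> nat) \<Rightarrow> nat \<Rightarrow> real" where
  "smallpart xs T c j = (\<Sum>i\<in>{i. i < length xs \<and> c i = j \<and> \<not> xs ! i > T}. xs ! i)"

lemma smallpart_sum:
  assumes "c \<in> schedules m xs"
  shows "(\<Sum>j<m. smallpart xs T c j) = (\<Sum>i\<in>{i. i < length xs \<and> \<not> xs ! i > T}. xs ! i)"
proof -
  have "(\<Sum>j\<in>{..<m}. \<Sum>i\<in>{x. x \<in> {i. i < length xs \<and> \<not> xs ! i > T} \<and> c x = j}. xs ! i)
       = (\<Sum>i\<in>{i. i < length xs \<and> \<not> xs ! i > T}. xs ! i)"
    by (rule sum.group) (use assms in \<open>auto simp: schedules_def\<close>)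
  moreover have "\<And>j. {x. x \<in> {i. i < length xs \<and> \<not> xs ! i > T} \<and> c x = j}
      = {i. i < length xs \<and> c i = j \<and> \<not> xs ! i > T}" by auto
  ultimately show ?thesis unfolding smallpart_def by simp
qed

theorem proposition6:
  fixes m :: nat and xs :: "real list" and a :: "nat \<Rightarrow> nat"
  assumes "m \<ge> 1"
    and "\<forall>x \<in> set xs. x \<ge> 0"
    and "simple_input m xs"
    and "greedy_schedule m xs a"
  shows "min_load m xs a \<ge> OPT m xs / (100 * root 4 (real m))"
proof -
  note nn = assms(2)
  define n where "n = length xs"
  define T where "T = OPT m xs / (100 * root 4 (real m))"
  define L where "L = min_load m xs a"
  have asch: "a \<in> schedules m xs" using assms(4) unfolding greedy_schedule_def by auto
  obtain jm where jm: "jm < m" "load xs a jm = L"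
    using min_load_attained[OF assms(1)] unfolding L_def by blast
  have L0: "L \<ge> 0" unfolding L_def by (rule min_load_nonneg[OF assms(1,2)])
  have G: "load_before xs a i (a i) \<le> L" if "i < n" for i
  proof -
    have "load_before xs a i (a i) \<le> load_before xs a i jm"
      using assms(4) that jm(1) unfolding greedy_schedule_def n_def by auto
    also have "\<dots> \<le> load xs a jm" by (rule lb_le_load) (use nn that n_def in auto)
    finally show ?thesis using jm by simp
  qed
  have r0: "root 4 (real m) > 0" using assms(1) by simp
  obtain b where b: "b \<in> schedules m xs" "min_load m xs b = OPT m xs"
    using OPT_attained[OF assms(1)] by blast
  have OPT0: "OPT m xs \<ge> 0" using b min_load_nonneg[OF assms(1,2)] by metis
  have T0: "T \<ge> 0" unfolding T_def using OPT0 r0 by simp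
  define Lg where "Lg = {i. i < length xs \<and> xs ! i > T}"
  have k: "num_large m xs = card Lg" unfolding num_large_def Lg_def T_def by simp
  have finLg: "finite Lg" unfolding Lg_def by auto
  consider (A) "n < m" | (B) "num_large m xs \<ge> m"
    | (C) "real (num_large m xs) \<le> real m - real m powr (3/4) / 50"
    using assms(3) unfolding simple_input_def n_def by blast
  then show ?thesis
  proof cases
    case A
    have "min_load m xs c \<le> 0" if c: "c \<in> schedules m xs" for c
    proof -
      have "card (c ` {..<n}) < card {..<m}"
        using card_image_le[of "{..<n}" c] A by simp
      then have "\<not> {..<m} \<subseteq> c ` {..<n}"
        by (meson card_mono finite_imageI finite_lessThan not_le)
      then obtain j where j: "j < m" "j \<notin> c ` {..<n}" by auto
      have e: "{i. i < length xs \<and> c i = j} = {}" using j n_def by auto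
      have "load xs c j = 0" unfolding load_def by (simp only: e) simp
      then show ?thesis using min_load_le[OF j(1), of xs c] by simp
    qed
    then have "OPT m xs \<le> 0" unfolding OPT_def
      using sched_finite sched_ne[OF assms(1)] by (simp add: Max_le_iff)
    then have "OPT m xs = 0" using OPT0 by simp
    then show ?thesis using L0 L_def by simp
  next
    case B
    show ?thesis
    proof (rule ccontr)
      assume "\<not> ?thesis"
      then have LT: "L < T" unfolding L_def T_def by simp
      have notjm: "a i \<noteq> jm" if "i \<in> Lg" for i
      proof
        assume "a i = jm"
        then have "xs ! i \<le> L" using elem_le_load[OF nn, of i a] that jm unfolding Lg_def by auto
        then show False using that LT unfolding Lg_def by simp
      qed
      have inj: "inj_on a Lg"
      proof (rule inj_onI, rule ccontr)
        fix i i' assume ii: "i \<in> Lg" "i' \<in> Lg" "a i = a i'" "i \<noteq> i'"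
        have "\<exists>p q. p \<in> Lg \<and> q \<in> Lg \<and> p < q \<and> a p = a q"
          using ii by (metis linorder_neqE_nat)
        then obtain p q where pq: "p \<in> Lg" "q \<in> Lg" "p < q" "a p = a q" by blast
        have "xs ! p \<le> load_before xs a q (a p)"
          by (rule elem_le_lb) (use nn pq in \<open>auto simp: Lg_def\<close>)
        also have "\<dots> \<le> L" using G[of q] pq unfolding Lg_def n_def by auto
        finally show False using pq LT unfolding Lg_def by simp
      qed
      have "a ` Lg \<subseteq> {..<m} - {jm}"
        using asch notjm unfolding schedules_def Lg_def by auto
      then have "card (a ` Lg) \<le> card ({..<m} - {jm})" by (intro card_mono) auto
      then have "card Lg \<le> m - 1" using card_image[OF inj] jm(1) by simp
      then show False using B k assms(1) by simp
    qed
  next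
    case C
    define S where "S = (\<Sum>i\<in>{i. i < length xs \<and> \<not> xs ! i > T}. xs ! i)"
    define M0 where "M0 = {..<m} - b ` Lg"
    have "{..<m} \<subseteq> M0 \<union> b ` Lg" unfolding M0_def by auto
    then have "m \<le> card (M0 \<union> b ` Lg)"
      by (metis card_lessThan card_mono finLg finite_Un finite_imageI finite_Diff finite_lessThan M0_def)
    also have "\<dots> \<le> card M0 + card (b ` Lg)" by (rule card_Un_le)
    also have "\<dots> \<le> card M0 + card Lg" using card_image_le[OF finLg, of b] by simp
    finally have cM0: "real m - real (num_large m xs) \<le> real (card M0)" using k by simp
    have "real (card M0) * OPT m xs \<le> (\<Sum>j\<in>M0. load xs b j)"
    proof -
      have "\<And>j. j \<in> M0 \<Longrightarrow> OPT m xs \<le> load xs b j"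
        using b(2) min_load_le[of _ m xs b] unfolding M0_def by auto
      then have "(\<Sum>j\<in>M0. OPT m xs) \<le> (\<Sum>j\<in>M0. load xs b j)" by (rule sum_mono)
      then show ?thesis by simp
    qed
    also have "\<dots> = (\<Sum>j\<in>M0. smallpart xs T b j)"
    proof (rule sum.cong)
      fix j assume j: "j \<in> M0"
      have "{i. i < length xs \<and> b i = j} = {i. i < length xs \<and> b i = j \<and> \<not> xs ! i > T}"
        using j unfolding M0_def Lg_def by auto
      then show "load xs b j = smallpart xs T b j" unfolding load_def smallpart_def by simp
    qed simp
    also have "\<dots> \<le> (\<Sum>j<m. smallpart xs T b j)"
      by (rule sum_mono2) (auto simp: M0_def smallpart_def intro!: sum_nonneg nn_nth[OF nn])
    also have "\<dots> = S" unfolding S_def by (rule smallpart_sum[OF b(1)])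
    also have "\<dots> = (\<Sum>j<m. smallpart xs T a j)" unfolding S_def by (rule smallpart_sum[OF asch, symmetric])
    also have "\<dots> \<le> (\<Sum>j<m. L + T)"
    proof (rule sum_mono)
      fix j assume "j \<in> {..<m}"
      define Sj where "Sj = {i. i < length xs \<and> a i = j \<and> \<not> xs ! i > T}"
      have finSj: "finite Sj" unfolding Sj_def by auto
      show "smallpart xs T a j \<le> L + T"
      proof (cases "Sj = {}")
        case True
        then show ?thesis using L0 T0 unfolding smallpart_def Sj_def[symmetric] by simp
      next
        case False
        define i0 where "i0 = Max Sj"
        have i0: "i0 \<in> Sj" unfolding i0_def using False finSj by simp
        have i0max: "\<And>i. i \<in> Sj \<Longrightarrow> i \<le> i0" unfolding i0_def using finSj by simp
        have eq: "Sj = insert i0 {i \<in> Sj. i < i0}" using i0 i0max by force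
        have "smallpart xs T a j = xs ! i0 + (\<Sum>i\<in>{i \<in> Sj. i < i0}. xs ! i)"
          unfolding smallpart_def Sj_def[symmetric]
          by (subst eq, subst sum.insert) (use finSj in auto)
        also have "(\<Sum>i\<in>{i \<in> Sj. i < i0}. xs ! i) \<le> load_before xs a i0 j"
          unfolding load_before_def
          by (rule sum_mono2) (use i0 in \<open>auto simp: Sj_def intro!: nn_nth[OF nn]\<close>)
        also have "load_before xs a i0 j \<le> L" using G[of i0] i0 unfolding Sj_def n_def by auto
        finally show ?thesis using i0 unfolding Sj_def by auto
      qed
    qed
    finally have key: "real (card M0) * OPT m xs \<le> real m * (L + T)" by simp
    define r where "r = root 4 (real m)"
    have mpos: "real m > 0" using assms(1) by simp
    have rr: "r = real m powr (1/4)" unfolding r_def by (simp add: root_powr_inverse)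
    have "real m powr (3/4) * r = real m" unfolding rr
      using mpos by (simp add: powr_add[symmetric])
    then have m34: "real m powr (3/4) = real m / r" using r0 r_def by (simp add: field_simps)
    have "real m / (50 * r) \<le> real (card M0)" using C cM0 m34 by simp
    then have "real m / (50 * r) * OPT m xs \<le> real m * (L + T)"
      using key OPT0 by (meson mult_right_mono order_trans)
    then have "real m * (OPT m xs / (50 * r)) \<le> real m * (L + T)" by simp
    then have "OPT m xs / (50 * r) \<le> L + T" using mpos
      by (simp only: mult_le_cancel_left_pos)
    then show ?thesis unfolding L_def T_def r_def[symmetric] by (simp add: field_simps)
  qed
qed

end
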